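(* In the stochastic extra-point scheme (defined in the context), choose $(\alpha,\beta,\gamma,\eta,\tau)=\big(\frac1{4L},\frac1{64\kappa},\frac1{64\kappa},\frac1{4L},\frac1{64L\kappa}\big)$. Then for all $k\ge0$, $$\mathbb E\big[\|z^k-z^*\|^2\big]\le\Big(1-\frac1{256\kappa}\Big)^k\cdot\frac{283}{256}\|z^0-z^*\|^2+\Big(\frac{40\sigma^2}{63L^2}+\frac{32\delta D}{63L}\Big)\cdot 256\kappa.$$
   Context: Let $\mathcal Z\subseteq\mathbb R^n$ be a nonempty closed convex set with $\|z-z'\|\le D$ for all $z,z'\in\mathcal Z$. Let $F:\mathcal Z\to\mathbb R^n$ satisfy $(F(z)-F(z'))^\top(z-z')\ge\mu\|z-z'\|^2$ and $\|F(z)-F(z')\|\le L\|z-z'\|$ for all $z,z'\in\mathcal Z$, where $0<\mu\le L$; write $\kappa=L/\mu$. Let $z^*$ be the unique point of $\mathcal Z$ with $F(z^* )^\top(z-z^* )\ge 0$ for all $z\in\mathcal Z$. $P_{\mathcal Z}$ denotes Euclidean projection onto $\mathcal Z$. A stochastic oracle returns $\hat F(z,\xi)$ for a random sample $\xi$, and satisfies, for every $z\in\mathcal Z$, $\mathbb E_\xi\|\hat F(z,\xi)-F(z)\|\le\delta$ and $\mathbb E_\xi\|\hat F(z,\xi)-F(z)\|^2\le\sigma^2$ for constants $\delta,\sigma\ge0$. Each oracle call $\hat F(z^j)$ means $\hat F(z^j,\xi^j)$ with a fresh sample independent of all previous samples. The stochastic extra-point scheme: starting from $z^0\in\mathcal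 Z$, with $z^{-1}:=z^0$ and $\hat F(z^{-1}):=\hat F(z^0)$, for $k\ge0$: $z^{k+0.5}=P_{\mathcal Z}(z^k+\beta(z^k-z^{k-1})-\eta\hat F(z^k))$ and $z^{k+1}=P_{\mathcal Z}(z^k-\alpha\hat F(z^{k+0.5})+\gamma(z^k-z^{k-1})-\tau(\hat F(z^k)-\hat F(z^{k-1})))$. *)

theory Defs
  imports "HOL-Analysis.Analysis" "HOL-Probability.Probability"
begin

text \<open>State of the stochastic extra-point scheme after k steps, driven by the
  sample sequence w (w (2k) is the sample used for the call at z^k,
  w (2k+1) the sample used for the call at z^(k+0.5)).
  Returns (z^k, z^(k-1), Fhat(z^(k-1))), with z^(-1) = z^0 and
  Fhat(z^(-1)) = Fhat(z^0) (the very same oracle value).\<close>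
fun sep_state ::
  "'a::euclidean_space set \<Rightarrow> ('a \<Rightarrow> 'b \<Rightarrow> 'a) \<Rightarrow> real \<Rightarrow> real \<Rightarrow> real \<Rightarrow> real \<Rightarrow> real
   \<Rightarrow> 'a \<Rightarrow> (nat \<Rightarrow> 'b) \<Rightarrow> nat \<Rightarrow> 'a \<times> 'a \<times> 'a" where
  "sep_state Z Fh \<alpha> \<beta> \<gamma> \<eta> \<tau> z0 w 0 = (z0, z0, Fh z0 (w 0))"
| "sep_state Z Fh \<alpha> \<beta> \<gamma> \<eta> \<tau> z0 w (Suc k) =
     (let (z, zp, gp) = sep_state Z Fh \<alpha> \<beta> \<gamma> \<eta> \<tau> z0 w k;
          g = Fh z (w (2 * k));
          zh = closest_point Z (z + \<beta> *\<^sub>R (z - zp) - \<eta> *\<^sub>R g);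
          gh = Fh zh (w (2 * k + 1));
          zn = closest_point Z (z - \<alpha> *\<^sub>R gh + \<gamma> *\<^sub>R (z - zp) - \<tau> *\<^sub>R (g - gp))
      in (zn, z, g))"

definition sep_iter ::
  "'a::euclidean_space set \<Rightarrow> ('a \<Rightarrow> 'b \<Rightarrow> 'a) \<Rightarrow> real \<Rightarrow> real \<Rightarrow> real \<Rightarrow> real \<Rightarrow> real
   \<Rightarrow> 'a \<Rightarrow> nat \<Rightarrow> (nat \<Rightarrow> 'b) \<Rightarrow> 'a" where
  "sep_iter Z Fh \<alpha> \<beta> \<gamma> \<eta> \<tau> z0 k w = fst (sep_state Z Fh \<alpha> \<beta> \<gamma> \<eta> \<tau> z0 w k)"

end

theory Submission
  imports Defs
begin


lemma scalar_step:
  fixes u a b r q s m m' e1 e2 e3 x :: real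
  assumes u: "0 < u" "u \<le> 1"
    and nn: "0 \<le> a" "0 \<le> b" "0 \<le> r" "0 \<le> q" "0 \<le> s" "0 \<le> m" "0 \<le> m'"
       "0 \<le> e1" "0 \<le> e2" "0 \<le> e3" "0 \<le> x"
    and qr: "q \<le> r + a" and mm: "m' \<le> a + b"
    and key: "s\<^sup>2 \<le> q\<^sup>2 - a\<^sup>2 - b\<^sup>2 + a * b / 2 + (e2 + e1) * b / 2 - (u/2) * r\<^sup>2 + x / 2
               + (u/32) * m * r + (u/32) * (m + e1 + e3) * s"
  shows "s\<^sup>2 + m'\<^sup>2 / 16 \<le> (1 - u/256) * (q\<^sup>2 + m\<^sup>2 / 16)
          + (64/63) * (x/2 + (e2\<^sup>2 + e1\<^sup>2)/4 + (e1\<^sup>2 + e3\<^sup>2)/16)"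
proof -
  have h1: "a * b / 2 \<le> a\<^sup>2/4 + b\<^sup>2/4"
  proof -
    have "a\<^sup>2/4 + b\<^sup>2/4 - a * b / 2 = (a - b)\<^sup>2 / 4" by (simp add: power2_eq_square field_simps)
    then show ?thesis using zero_le_power2[of "a-b"] by linarith
  qed
  have h2: "(e2 + e1) * b / 2 \<le> b\<^sup>2/2 + (e2\<^sup>2 + e1\<^sup>2)/4"
  proof -
    have "b\<^sup>2/2 + (e2\<^sup>2 + e1\<^sup>2)/4 - (e2 + e1) * b / 2 = (e2 + e1 - 2 * b)\<^sup>2/8 + (e2 - e1)\<^sup>2/8"
      by (simp add: power2_eq_square field_simps)
    then show ?thesis using zero_le_power2[of "e2 + e1 - 2 * b"] zero_le_power2[of "e2 - e1"] by linarith
  qed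
  have h3: "m * r / 32 \<le> r\<^sup>2/8 + m\<^sup>2/512"
  proof -
    have "r\<^sup>2/8 + m\<^sup>2/512 - m * r / 32 = (8 * r - m)\<^sup>2/512" by (simp add: power2_eq_square field_simps)
    then show ?thesis using zero_le_power2[of "8 * r - m"] by linarith
  qed
  have h4: "q\<^sup>2 \<le> 2 * r\<^sup>2 + 2 * a\<^sup>2"
  proof -
    have "q\<^sup>2 \<le> (r + a)\<^sup>2" using qr nn by (intro power_mono) auto
    also have "(r + a)\<^sup>2 = 2 * r\<^sup>2 + 2 * a\<^sup>2 - (r - a)\<^sup>2" by (simp add: power2_eq_square field_simps)
    finally show ?thesis using zero_le_power2[of "r - a"] by linarith
  qed
  have h5: "m * s / 32 \<le> s\<^sup>2/128 + m\<^sup>2/32"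
  proof -
    have "s\<^sup>2/128 + m\<^sup>2/32 - m * s / 32 = (s - 2 * m)\<^sup>2/128" by (simp add: power2_eq_square field_simps)
    then show ?thesis using zero_le_power2[of "s - 2 * m"] by linarith
  qed
  have h6: "(e1 + e3) * s / 32 \<le> s\<^sup>2/128 + (e1\<^sup>2 + e3\<^sup>2)/16"
  proof -
    have "s\<^sup>2/128 + (e1\<^sup>2 + e3\<^sup>2)/16 - (e1 + e3) * s / 32 = (s - 2 * (e1+e3))\<^sup>2/128 + (e1 - e3)\<^sup>2/32"
      by (simp add: power2_eq_square field_simps)
    then show ?thesis using zero_le_power2[of "s - 2 * (e1+e3)"] zero_le_power2[of "e1 - e3"] by linarith
  qed
  have h7: "m'\<^sup>2 \<le> (4/3) * a\<^sup>2 + 4 * b\<^sup>2"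
  proof -
    have "m'\<^sup>2 \<le> (a + b)\<^sup>2" using mm nn by (intro power_mono) auto
    also have "(a + b)\<^sup>2 = (4/3) * a\<^sup>2 + 4 * b\<^sup>2 - (a - 3 * b)\<^sup>2/3" by (simp add: power2_eq_square field_simps)
    finally show ?thesis using zero_le_power2[of "a - 3 * b"] by linarith
  qed
  have k': "s\<^sup>2 \<le> q\<^sup>2 - a\<^sup>2 - b\<^sup>2 + a * b/2 + e2 * b/2 + e1 * b/2 - u * r\<^sup>2/2 + x/2 + u * (m * r)/32
            + u * (m * s)/32 + u * (e1 * s)/32 + u * (e3 * s)/32"
  proof -
    have "q\<^sup>2 - a\<^sup>2 - b\<^sup>2 + a * b / 2 + (e2 + e1) * b / 2 - (u/2) * r\<^sup>2 + x / 2
               + (u/32) * m * r + (u/32) * (m + e1 + e3) * s = q\<^sup>2 - a\<^sup>2 - b\<^sup>2 + a * b/2 + e2 * b/2 + e1 * b/2 - u * r\<^sup>2/2 + x/2 + u * (m * r)/32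
            + u * (m * s)/32 + u * (e1 * s)/32 + u * (e3 * s)/32" by (simp add: field_simps)
    then show ?thesis using key by linarith
  qed
  have h2': "e2 * b/2 + e1 * b/2 \<le> b\<^sup>2/2 + e2\<^sup>2/4 + e1\<^sup>2/4" using h2 by (simp add: field_simps)
  have f3: "u * (m * r)/32 \<le> u * r\<^sup>2/8 + u * m\<^sup>2/512"
  proof -
    have "u * (m * r / 32) \<le> u * (r\<^sup>2/8 + m\<^sup>2/512)" using mult_left_mono[OF h3, of u] u by simp
    then show ?thesis by (simp add: field_simps)
  qed
  have f5: "u * (m * s)/32 \<le> u * s\<^sup>2/128 + u * m\<^sup>2/32"
  proof -
    have "u * (m * s / 32) \<le> u * (s\<^sup>2/128 + m\<^sup>2/32)" using mult_left_mono[OF h5, of u] u by simp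
    then show ?thesis by (simp add: field_simps)
  qed
  have f6: "u * (e1 * s)/32 + u * (e3 * s)/32 \<le> u * s\<^sup>2/128 + u * e1\<^sup>2/16 + u * e3\<^sup>2/16"
  proof -
    have "u * ((e1 + e3) * s / 32) \<le> u * (s\<^sup>2/128 + (e1\<^sup>2 + e3\<^sup>2)/16)" using mult_left_mono[OF h6, of u] u by simp
    then show ?thesis by (simp add: field_simps)
  qed
  have f4: "u * q\<^sup>2 \<le> 2 * (u * r\<^sup>2) + 2 * (u * a\<^sup>2)"
  proof -
    have "u * q\<^sup>2 \<le> u * (2 * r\<^sup>2 + 2 * a\<^sup>2)" using mult_left_mono[OF h4, of u] u by simp
    then show ?thesis by (simp add: field_simps)
  qed
  have f8: "u * a\<^sup>2 \<le> a\<^sup>2" using u by (simp add: mult_left_le_one_le)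
  have st1: "s\<^sup>2 \<le> q\<^sup>2 - 3*a\<^sup>2/4 - b\<^sup>2/4 + e2\<^sup>2/4 + e1\<^sup>2/4 + x/2 - u * r\<^sup>2/2 + u * (m * r)/32
     + u * s\<^sup>2/64 + u * m\<^sup>2/32 + u * e1\<^sup>2/16 + u * e3\<^sup>2/16"
    using k' h1 h2' f5 f6 by linarith
  have st2: "s\<^sup>2 \<le> q\<^sup>2 - 3*a\<^sup>2/4 - b\<^sup>2/4 + e2\<^sup>2/4 + e1\<^sup>2/4 + x/2 - 3*(u * r\<^sup>2)/8
     + u * s\<^sup>2/64 + 17*(u * m\<^sup>2)/512 + u * e1\<^sup>2/16 + u * e3\<^sup>2/16"
    using st1 f3 by linarith
  have st3: "s\<^sup>2 \<le> q\<^sup>2 - 3*(u * q\<^sup>2)/16 - 3*a\<^sup>2/8 - b\<^sup>2/4 + e2\<^sup>2/4 + e1\<^sup>2/4 + x/2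
     + u * s\<^sup>2/64 + 17*(u * m\<^sup>2)/512 + u * e1\<^sup>2/16 + u * e3\<^sup>2/16"
    using st2 f4 f8 by linarith
  have main: "s\<^sup>2 - u * s\<^sup>2/64 + m'\<^sup>2/16 \<le> q\<^sup>2 - 3*(u * q\<^sup>2)/16 + 17*(u * m\<^sup>2)/512 + x/2 + e2\<^sup>2/4 + e1\<^sup>2/4
        + u * e1\<^sup>2/16 + u * e3\<^sup>2/16"
    using st3 h7 zero_le_power2[of a] by linarith
  define N where "N = x/2 + e2\<^sup>2/4 + e1\<^sup>2/4 + e1\<^sup>2/16 + e3\<^sup>2/16"
  define G where "G = (1 - u/256) * (q\<^sup>2 + m\<^sup>2 / 16) + (64/63) * N"
  have AG: "(1 - u/64) * G = q\<^sup>2 - (5/256)*(u * q\<^sup>2) + (u * (u * q\<^sup>2))/16384 + m\<^sup>2/16 - (5/4096)*(u * m\<^sup>2) + (u * (u * m\<^sup>2))/262144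
       + (64/63)*N - (u*N)/63"
    unfolding G_def by (simp add: field_simps)
  have p1: "0 \<le> u * (u * q\<^sup>2)" "0 \<le> u * (u * m\<^sup>2)" using u by auto
  have p2: "u*N \<le> N" using u N_def nn by (simp add: mult_left_le_one_le)
  have p3: "0 \<le> u * e1\<^sup>2" "0 \<le> u * e3\<^sup>2" "0 \<le> u * q\<^sup>2" "0 \<le> u * m\<^sup>2" "0 \<le> u * s\<^sup>2" using u by auto
  have p4: "u * e1\<^sup>2 \<le> e1\<^sup>2" "u * e3\<^sup>2 \<le> e3\<^sup>2" using u by (auto simp: mult_left_le_one_le)
  have lhs: "(1 - u/64) * (s\<^sup>2 + m'\<^sup>2/16) = s\<^sup>2 - u * s\<^sup>2/64 + m'\<^sup>2/16 - (u * m'\<^sup>2)/1024"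
    by (simp add: field_simps)
  have p5: "0 \<le> u * m'\<^sup>2" using u by auto
  have p6: "u * m\<^sup>2 \<le> m\<^sup>2" "0 \<le> m\<^sup>2" "0 \<le> q\<^sup>2" using u by (auto simp: mult_left_le_one_le)
  have "(1 - u/64) * (s\<^sup>2 + m'\<^sup>2/16) \<le> (1 - u/64) * G"
    unfolding lhs AG using main p1 p2 p3 p4 p5 p6 nn N_def by linarith
  then have "s\<^sup>2 + m'\<^sup>2/16 \<le> G" using u by (simp add: mult_le_cancel_left_pos)
  moreover have "x/2 + (e2\<^sup>2 + e1\<^sup>2)/4 + (e1\<^sup>2 + e3\<^sup>2)/16 = N" unfolding N_def by (simp add: field_simps)
  ultimately show ?thesis unfolding G_def by simp
qed

lemma key_identity:
  fixes z zp zh zn zs g gh gp :: "'a::real_inner" and \<alpha> \<beta> \<tau> :: real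
  shows "(norm (zn - zs))\<^sup>2 - (norm (z - zs))\<^sup>2 + (norm (z - zh))\<^sup>2 + (norm (zh - zn))\<^sup>2 =
     2 * inner ((z - \<alpha> *\<^sub>R gh + \<beta> *\<^sub>R (z - zp) - \<tau> *\<^sub>R (g - gp)) - zn) (zs - zn)
   + 2 * inner ((z + \<beta> *\<^sub>R (z - zp) - \<alpha> *\<^sub>R g) - zh) (zn - zh)
   + 2 * \<alpha> * inner (gh - g) (zh - zn) + 2 * \<alpha> * inner gh (zs - zh)
   - 2 * \<beta> * inner (z - zp) (zs - zh) + 2 * \<tau> * inner (g - gp) (zs - zn)"
  by (simp add: power2_norm_eq_inner inner_diff_left inner_diff_right inner_add_left inner_add_right
      inner_commute algebra_simps)




lemma lin2:
  fixes f g :: "'x \<Rightarrow> real"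
  assumes [measurable]: "f \<in> borel_measurable N" "g \<in> borel_measurable N"
    and f0: "\<And>x. 0 \<le> f x" and g0: "\<And>x. 0 \<le> g x" and c: "0 \<le> c"
    and fa: "(\<integral>\<^sup>+ x. ennreal (f x) \<partial>N) \<le> ennreal a" and gb: "(\<integral>\<^sup>+ x. ennreal (g x) \<partial>N) \<le> ennreal b"
    and a: "0 \<le> a" and b: "0 \<le> b"
  shows "(\<integral>\<^sup>+ x. ennreal (c * f x + g x) \<partial>N) \<le> ennreal (c * a + b)"
proof -
  have "(\<integral>\<^sup>+ x. ennreal (c * f x + g x) \<partial>N) = (\<integral>\<^sup>+ x. ennreal c * ennreal (f x) + ennreal (g x) \<partial>N)"
    using f0 g0 c by (intro nn_integral_cong) (simp add: ennreal_plus ennreal_mult)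
  also have "\<dots> = ennreal c * (\<integral>\<^sup>+ x. ennreal (f x) \<partial>N) + (\<integral>\<^sup>+ x. ennreal (g x) \<partial>N)"
    by (simp add: nn_integral_add nn_integral_cmult)
  also have "\<dots> \<le> ennreal c * ennreal a + ennreal b"
    using fa gb by (intro add_mono mult_left_mono) auto
  also have "\<dots> = ennreal (c * a + b)" using a b c by (simp add: ennreal_plus ennreal_mult)
  finally show ?thesis .
qed

locale sepl =
  fixes Z :: "'a::euclidean_space set"
    and F :: "'a \<Rightarrow> 'a"
    and Fhat :: "'a \<Rightarrow> 'b \<Rightarrow> 'a"
    and M :: "'b measure"
    and D L \<mu> \<delta> \<sigma> :: real
    and zstar z0 :: 'a
  assumes Z_closed: "closed Z" and Z_convex: "convex Z" and Z_ne: "Z \<noteq> {}"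
    and Z_diam: "\<forall>z\<in>Z. \<forall>z'\<in>Z. norm (z - z') \<le> D"
    and F_strmono: "\<forall>z\<in>Z. \<forall>z'\<in>Z. (F z - F z') \<bullet> (z - z') \<ge> \<mu> * (norm (z - z'))\<^sup>2"
    and F_lip: "\<forall>z\<in>Z. \<forall>z'\<in>Z. norm (F z - F z') \<le> L * norm (z - z')"
    and mu_pos: "0 < \<mu>" and mu_le_L: "\<mu> \<le> L"
    and zstar_in: "zstar \<in> Z"
    and zstar_sol: "\<forall>z\<in>Z. F zstar \<bullet> (z - zstar) \<ge> 0"
    and M_prob: "prob_space M"
    and Fhat_meas: "(\<lambda>(z, \<xi>). Fhat z \<xi>) \<in> borel_measurable (borel \<Otimes>\<^sub>M M)"
    and delta_nonneg: "0 \<le> \<delta>" and sigma_nonneg: "0 \<le> \<sigma>"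
    and oracle_bias: "\<forall>z\<in>Z. (\<integral>\<^sup>+ \<xi>. ennreal (norm (Fhat z \<xi> - F z)) \<partial>M) \<le> ennreal \<delta>"
    and oracle_var: "\<forall>z\<in>Z. (\<integral>\<^sup>+ \<xi>. ennreal ((norm (Fhat z \<xi> - F z))\<^sup>2) \<partial>M) \<le> ennreal (\<sigma>\<^sup>2)"
    and z0_in: "z0 \<in> Z"
begin

definition "al = 1 / (4 * L)"
definition "bt = 1 / (64 * (L / \<mu>))"
definition "ta = 1 / (64 * L * (L / \<mu>))"

lemma tri3: "norm (x + y - w) \<le> norm x + norm y + norm (w::'c::real_normed_vector)"
  by (meson add_right_mono norm_triangle_ineq norm_triangle_ineq4 order_trans)

lemma L_pos: "0 < L" using mu_pos mu_le_L by linarith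

lemma det_step:
  fixes z zp g gh gp :: 'a
  assumes z: "z \<in> Z" and zp: "zp \<in> Z"
  defines "zh \<equiv> closest_point Z (z + bt *\<^sub>R (z - zp) - al *\<^sub>R g)"
  defines "zn \<equiv> closest_point Z (z - al *\<^sub>R gh + bt *\<^sub>R (z - zp) - ta *\<^sub>R (g - gp))"
  shows "(norm (zn - zstar))\<^sup>2 + (norm (zn - z))\<^sup>2 / 16 \<le> (1 - 1 / (256 * (L / \<mu>))) * ((norm (z - zstar))\<^sup>2 + (norm (z - zp))\<^sup>2 / 16)
     + (64/63) * ((D * norm (gh - F zh) / L) / 2 + ((norm (gh - F zh) / L)\<^sup>2 + (norm (g - F z) / L)\<^sup>2)/4
                  + ((norm (g - F z) / L)\<^sup>2 + (norm (gp - F zp) / L)\<^sup>2)/16)"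
proof -
  have L: "0 < L" by (rule L_pos)
  define u where "u = \<mu> / L"
  have u: "0 < u" "u \<le> 1" using mu_pos mu_le_L L by (auto simp: u_def)
  have bt_u: "bt = u / 64" and ta_u: "ta = u / (64 * L)" and rho: "1 / (256 * (L / \<mu>)) = u / 256"
    using L mu_pos by (auto simp: bt_def ta_def u_def field_simps)
  have al0: "0 \<le> al" using L by (simp add: al_def)
  have zh_in: "zh \<in> Z" unfolding zh_def by (rule closest_point_in_set[OF Z_closed Z_ne])
  have zn_in: "zn \<in> Z" unfolding zn_def by (rule closest_point_in_set[OF Z_closed Z_ne])
  define zs where "zs = zstar"
  have zs: "zs \<in> Z" using zstar_in by (simp add: zs_def)
  have D1: "inner ((z - al *\<^sub>R gh + bt *\<^sub>R (z - zp) - ta *\<^sub>R (g - gp)) - zn) (zs - zn) \<le> 0"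
    unfolding zn_def by (rule closest_point_dot[OF Z_convex Z_closed zs])
  have D2: "inner ((z + bt *\<^sub>R (z - zp) - al *\<^sub>R g) - zh) (zn - zh) \<le> 0"
    unfolding zh_def by (rule closest_point_dot[OF Z_convex Z_closed zn_in])
  define a where "a = norm (z - zh)"
  define b where "b = norm (zh - zn)"
  define r where "r = norm (zh - zs)"
  define q where "q = norm (z - zs)"
  define s where "s = norm (zn - zs)"
  define m where "m = norm (z - zp)"
  define m' where "m' = norm (zn - z)"
  define E where "E = norm (g - F z)"
  define Eh where "Eh = norm (gh - F zh)"
  define Ep where "Ep = norm (gp - F zp)"
  have KEY0: "s\<^sup>2 \<le> q\<^sup>2 - a\<^sup>2 - b\<^sup>2 + 2 * al * inner (gh - g) (zh - zn) + 2 * al * inner gh (zs - zh)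
   - 2 * bt * inner (z - zp) (zs - zh) + 2 * ta * inner (g - gp) (zs - zn)"
    using key_identity[of zn zs z zh al gh bt zp ta g gp] D1 D2 unfolding s_def q_def a_def b_def by linarith
  have B1: "2 * al * inner (gh - g) (zh - zn) \<le> a * b / 2 + (Eh / L + E / L) * b / 2"
  proof -
    have "gh - g = (F zh - F z) + (gh - F zh) - (g - F z)" by simp
    then have "norm (gh - g) \<le> norm (F zh - F z) + Eh + E" unfolding Eh_def E_def
      using tri3[of "F zh - F z" "gh - F zh" "g - F z"] by simp
    also have "norm (F zh - F z) \<le> L * a"
    proof -
      have "norm (F zh - F z) \<le> L * norm (zh - z)" using F_lip zh_in z by blast
      then show ?thesis unfolding a_def by (simp add: norm_minus_commute)
    qed
    finally have n1: "norm (gh - g) \<le> L * a + Eh + E" by linarith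
    have "inner (gh - g) (zh - zn) \<le> norm (gh - g) * b" unfolding b_def by (rule norm_cauchy_schwarz)
    also have "\<dots> \<le> (L * a + Eh + E) * b" using n1 by (intro mult_right_mono) (auto simp: b_def)
    finally have "2 * al * inner (gh - g) (zh - zn) \<le> 2 * al * ((L * a + Eh + E) * b)"
      using al0 by (intro mult_left_mono) auto
    also have "2 * al * ((L * a + Eh + E) * b) = a * b / 2 + (Eh / L + E / L) * b / 2"
      using L by (simp add: al_def field_simps)
    finally show ?thesis .
  qed
  have B2: "2 * al * inner gh (zs - zh) \<le> - (u/2) * r\<^sup>2 + (D * Eh / L) / 2"
  proof -
    have i1: "inner gh (zs - zh) = - inner (F zh - F zs) (zh - zs) - inner (F zs) (zh - zs) + inner (gh - F zh) (zs - zh)"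
      by (simp add: inner_diff_left inner_diff_right algebra_simps)
    have i2: "inner (F zh - F zs) (zh - zs) \<ge> \<mu> * r\<^sup>2" using F_strmono zh_in zs unfolding r_def by blast
    have i3: "inner (F zs) (zh - zs) \<ge> 0" using zstar_sol zh_in unfolding zs_def by blast
    have "inner (gh - F zh) (zs - zh) \<le> Eh * norm (zs - zh)" unfolding Eh_def by (rule norm_cauchy_schwarz)
    also have "\<dots> \<le> Eh * D" using Z_diam zs zh_in by (intro mult_left_mono) (auto simp: Eh_def)
    finally have i4: "inner (gh - F zh) (zs - zh) \<le> Eh * D" .
    have "inner gh (zs - zh) \<le> - \<mu> * r\<^sup>2 + Eh * D" using i1 i2 i3 i4 by linarith
    then have "2 * al * inner gh (zs - zh) \<le> 2 * al * (- \<mu> * r\<^sup>2 + Eh * D)"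
      using al0 by (intro mult_left_mono) auto
    also have "2 * al * (- \<mu> * r\<^sup>2 + Eh * D) = - (u/2) * r\<^sup>2 + (D * Eh / L) / 2"
      using L by (simp add: al_def u_def field_simps)
    finally show ?thesis .
  qed
  have B3: "- 2 * bt * inner (z - zp) (zs - zh) \<le> (u/32) * m * r"
  proof -
    have "- inner (z - zp) (zs - zh) = inner (z - zp) (zh - zs)" by (simp add: inner_diff_right)
    also have "\<dots> \<le> m * r" unfolding m_def r_def by (rule norm_cauchy_schwarz)
    finally have "- inner (z - zp) (zs - zh) \<le> m * r" .
    then have "2 * bt * (- inner (z - zp) (zs - zh)) \<le> 2 * bt * (m * r)"
      using u by (intro mult_left_mono) (auto simp: bt_u)
    then show ?thesis by (simp add: bt_u algebra_simps)
  qed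
  have B4: "2 * ta * inner (g - gp) (zs - zn) \<le> (u/32) * (m + E / L + Ep / L) * s"
  proof -
    have "g - gp = (F z - F zp) + (g - F z) - (gp - F zp)" by simp
    then have "norm (g - gp) \<le> norm (F z - F zp) + E + Ep" unfolding Ep_def E_def
      using tri3[of "F z - F zp" "g - F z" "gp - F zp"] by simp
    also have "norm (F z - F zp) \<le> L * m" using F_lip zp z unfolding m_def by blast
    finally have n1: "norm (g - gp) \<le> L * m + E + Ep" by linarith
    have "inner (g - gp) (zs - zn) \<le> norm (g - gp) * s" unfolding s_def
      using norm_cauchy_schwarz[of "g - gp" "zs - zn"] by (simp add: norm_minus_commute)
    also have "\<dots> \<le> (L * m + E + Ep) * s" using n1 by (intro mult_right_mono) (auto simp: s_def)
    finally have "2 * ta * inner (g - gp) (zs - zn) \<le> 2 * ta * ((L * m + E + Ep) * s)"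
      using u L by (intro mult_left_mono) (auto simp: ta_u)
    also have "2 * ta * ((L * m + E + Ep) * s) = (u/32) * (m + E / L + Ep / L) * s"
      using L by (simp add: ta_u field_simps)
    finally show ?thesis .
  qed
  have qr: "q \<le> r + a"
  proof -
    have "norm (z - zs) \<le> norm (z - zh) + norm (zh - zs)" using norm_triangle_ineq[of "z - zh" "zh - zs"] by simp
    then show ?thesis unfolding q_def r_def a_def by linarith
  qed
  have mm: "m' \<le> a + b"
  proof -
    have "m' \<le> norm (zh - z) + norm (zn - zh)" unfolding m'_def using norm_triangle_ineq[of "zh - z" "zn - zh"] by simp
    then show ?thesis unfolding a_def b_def by (simp add: norm_minus_commute)
  qed
  have key: "s\<^sup>2 \<le> q\<^sup>2 - a\<^sup>2 - b\<^sup>2 + a * b / 2 + (Eh / L + E / L) * b / 2 - (u/2) * r\<^sup>2 + (D * Eh / L) / 2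
               + (u/32) * m * r + (u/32) * (m + E / L + Ep / L) * s"
    using KEY0 B1 B2 B3 B4 by linarith
  have D0: "0 \<le> D" using Z_diam z by force
  have "s\<^sup>2 + m'\<^sup>2 / 16 \<le> (1 - u/256) * (q\<^sup>2 + m\<^sup>2 / 16)
          + (64/63) * ((D * Eh / L)/2 + ((Eh / L)\<^sup>2 + (E / L)\<^sup>2)/4 + ((E / L)\<^sup>2 + (Ep / L)\<^sup>2)/16)"
    by (rule scalar_step[OF u _ _ _ _ _ _ _ _ _ _ _ qr mm key])
       (use L D0 in \<open>auto simp: a_def b_def r_def q_def s_def m_def m'_def E_def Eh_def Ep_def\<close>)
  then show ?thesis unfolding rho s_def q_def m_def m'_def E_def Eh_def Ep_def zs_def .
qed

definition "S w k = sep_state Z Fhat al bt bt al ta z0 w k"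
definition "zK w k = fst (S w k)"
definition "zpK w k = fst (snd (S w k))"
definition "gpK w k = snd (snd (S w k))"
definition "gK w k = Fhat (zK w k) (w (2 * k))"
definition "zhK w k = closest_point Z (zK w k + bt *\<^sub>R (zK w k - zpK w k) - al *\<^sub>R gK w k)"
definition "ghK w k = Fhat (zhK w k) (w (2 * k + 1))"

lemma S_0: "zK w 0 = z0" "zpK w 0 = z0" "gpK w 0 = Fhat z0 (w 0)"
  by (simp_all add: zK_def zpK_def gpK_def S_def)

lemma S_Suc: "zK w (Suc k) = closest_point Z (zK w k - al *\<^sub>R ghK w k + bt *\<^sub>R (zK w k - zpK w k) - ta *\<^sub>R (gK w k - gpK w k))"
  "zpK w (Suc k) = zK w k" "gpK w (Suc k) = gK w k"
  by (simp_all add: zK_def zpK_def gpK_def S_def gK_def zhK_def ghK_def Let_def split_beta)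

lemma in_Z: "zK w k \<in> Z \<and> zpK w k \<in> Z"
  by (induction k) (auto simp: S_0 S_Suc z0_in closest_point_in_set[OF Z_closed Z_ne])

lemma zhK_in: "zhK w k \<in> Z" unfolding zhK_def by (rule closest_point_in_set[OF Z_closed Z_ne])

lemma agree: "(\<forall>i<2*k. w i = w' i) \<Longrightarrow> w 0 = w' 0 \<Longrightarrow> zK w k = zK w' k \<and> zpK w k = zpK w' k \<and> gpK w k = gpK w' k"
proof (induction k)
  case 0 then show ?case by (simp add: S_0)
next
  case (Suc k)
  then have IH: "zK w k = zK w' k \<and> zpK w k = zpK w' k \<and> gpK w k = gpK w' k" by auto
  have "w (2*k) = w' (2*k)" "w (2*k+1) = w' (2*k+1)" using Suc.prems by auto
  then show ?case using IH by (simp add: S_Suc gK_def ghK_def zhK_def)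
qed

lemma agree_z: "(\<forall>i<2*k. w i = w' i) \<Longrightarrow> zK w k = zK w' k"
proof (cases k)
  case 0 then show ?thesis by (simp add: S_0)
next
  case (Suc j)
  assume a: "\<forall>i<2*k. w i = w' i"
  then have "w 0 = w' 0" using Suc by auto
  then show ?thesis using agree[OF a] by auto
qed

lemma agree_zh: "(\<forall>i<2*k+1. w i = w' i) \<Longrightarrow> zhK w k = zhK w' k"
proof -
  assume a: "\<forall>i<2*k+1. w i = w' i"
  then have "\<forall>i<2*k. w i = w' i" "w 0 = w' 0" "w (2*k) = w' (2*k)" by auto
  from agree[OF this(1,2)] this(3) show ?thesis by (simp add: zhK_def gK_def)
qed

lemma cp_meas[measurable]: "closest_point Z \<in> borel_measurable borel"
  by (rule borel_measurable_continuous_onI[OF continuous_on_closest_point[OF Z_convex Z_closed Z_ne]])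

lemma Fhat_comp[measurable (raw)]:
  assumes "\<phi> \<in> borel_measurable N" "\<psi> \<in> measurable N M"
  shows "(\<lambda>w. Fhat (\<phi> w) (\<psi> w)) \<in> borel_measurable N"
proof -
  have "(\<lambda>w. (\<phi> w, \<psi> w)) \<in> measurable N (borel \<Otimes>\<^sub>M M)" using assms by (rule measurable_Pair)
  from measurable_comp[OF this Fhat_meas] show ?thesis by (simp add: comp_def)
qed

lemma meas_state: "{..<2*k} \<subseteq> J \<Longrightarrow> 0 \<in> J \<Longrightarrow>
   (\<lambda>w. zK w k) \<in> borel_measurable (PiM J (\<lambda>_. M)) \<and> (\<lambda>w. zpK w k) \<in> borel_measurable (PiM J (\<lambda>_. M))
 \<and> (\<lambda>w. gpK w k) \<in> borel_measurable (PiM J (\<lambda>_. M))"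
proof (induction k)
  case 0 then show ?case by (simp add: S_0 measurable_component_singleton)
next
  case (Suc k)
  have "{..<2*k} \<subseteq> J" using Suc.prems by auto
  with Suc have IH[measurable]: "(\<lambda>w. zK w k) \<in> borel_measurable (PiM J (\<lambda>_. M))" "(\<lambda>w. zpK w k) \<in> borel_measurable (PiM J (\<lambda>_. M))"
   "(\<lambda>w. gpK w k) \<in> borel_measurable (PiM J (\<lambda>_. M))" by auto
  have j[measurable]: "(\<lambda>w. w (2*k)) \<in> measurable (PiM J (\<lambda>_. M)) M" "(\<lambda>w. w (2*k+1)) \<in> measurable (PiM J (\<lambda>_. M)) M"
    using Suc.prems by (auto intro!: measurable_component_singleton)
  have g[measurable]: "(\<lambda>w. gK w k) \<in> borel_measurable (PiM J (\<lambda>_. M))" unfolding gK_def by measurable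
  have zh[measurable]: "(\<lambda>w. zhK w k) \<in> borel_measurable (PiM J (\<lambda>_. M))" unfolding zhK_def by measurable
  have gh[measurable]: "(\<lambda>w. ghK w k) \<in> borel_measurable (PiM J (\<lambda>_. M))" unfolding ghK_def by measurable
  show ?case unfolding S_Suc by measurable
qed


lemma meas_z: "{..<2*k} \<subseteq> J \<Longrightarrow> (\<lambda>w. zK w k) \<in> borel_measurable (PiM J (\<lambda>_. M))"
proof (cases k)
  case 0 then show ?thesis by (simp add: S_0)
next
  case (Suc j)
  assume "{..<2*k} \<subseteq> J"
  moreover then have "0 \<in> J" using Suc by auto
  ultimately show ?thesis using meas_state by blast
qed

lemma meas_all: "{..<2*k+1} \<subseteq> J \<Longrightarrow>
   (\<lambda>w. gK w k) \<in> borel_measurable (PiM J (\<lambda>_. M)) \<and> (\<lambda>w. zhK w k) \<in> borel_measurable (PiM J (\<lambda>_. M))"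
proof -
  assume a: "{..<2*k+1} \<subseteq> J"
  then have "{..<2*k} \<subseteq> J" "0 \<in> J" by auto
  note m = meas_state[OF this]
  have [measurable]: "(\<lambda>w. zK w k) \<in> borel_measurable (PiM J (\<lambda>_. M))" "(\<lambda>w. zpK w k) \<in> borel_measurable (PiM J (\<lambda>_. M))"
    using m by auto
  have j[measurable]: "(\<lambda>w. w (2*k)) \<in> measurable (PiM J (\<lambda>_. M)) M"
    using a by (auto intro!: measurable_component_singleton)
  have g[measurable]: "(\<lambda>w. gK w k) \<in> borel_measurable (PiM J (\<lambda>_. M))" unfolding gK_def by measurable
  have zh[measurable]: "(\<lambda>w. zhK w k) \<in> borel_measurable (PiM J (\<lambda>_. M))" unfolding zhK_def by measurable
  show ?thesis using g zh by auto
qed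

lemma F_cont: "continuous_on UNIV (F \<circ> closest_point Z)"
proof (rule continuous_on_compose)
  show "continuous_on UNIV (closest_point Z)" by (rule continuous_on_closest_point[OF Z_convex Z_closed Z_ne])
  have "L-lipschitz_on Z F"
    using F_lip L_pos by (intro lipschitz_onI) (auto simp: dist_norm)
  then have "continuous_on Z F" by (rule lipschitz_on_continuous_on)
  then show "continuous_on (closest_point Z ` UNIV) F"
    by (rule continuous_on_subset) (auto intro: closest_point_in_set[OF Z_closed Z_ne])
qed

lemma F'_meas[measurable]: "(F \<circ> closest_point Z) \<in> borel_measurable borel"
  by (rule borel_measurable_continuous_onI[OF F_cont])

lemma PP: "product_prob_space (\<lambda>_. M)" by (rule product_prob_spaceI) (rule M_prob)

lemma fresh:
  fixes f :: "(nat \<Rightarrow> 'b) \<Rightarrow> 'a" and h :: "'a \<Rightarrow> real"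
  assumes fm: "f \<in> borel_measurable (PiM {..<n} (\<lambda>_. M))"
    and fdep: "\<And>w w'. (\<forall>i<n. w i = w' i) \<Longrightarrow> f w = f w'"
    and fZ: "\<And>w. f w \<in> Z"
    and hm[measurable]: "h \<in> borel_measurable borel"
    and hb: "\<forall>z\<in>Z. (\<integral>\<^sup>+ \<xi>. ennreal (h (Fhat z \<xi> - F z)) \<partial>M) \<le> c"
  shows "(\<integral>\<^sup>+ w. ennreal (h (Fhat (f w) (w n) - F (f w))) \<partial>(PiM UNIV (\<lambda>_. M))) \<le> c"
proof -
  interpret P: product_prob_space "\<lambda>_. M" UNIV by (rule PP)
  define J where "J = insert n {..<n}"
  have J: "finite J" "J \<subseteq> UNIV" by (auto simp: J_def)
  define G where "G x = ennreal (h (Fhat (f x) (x n) - (F \<circ> closest_point Z) (f x)))" for x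
  have G_eq: "G x = ennreal (h (Fhat (f x) (x n) - F (f x)))" for x
    using fZ[of x] by (simp add: G_def closest_point_self)
  have fJ: "f \<in> borel_measurable (PiM J (\<lambda>_. M))"
  proof -
    have "(\<lambda>x. f (restrict x {..<n})) \<in> borel_measurable (PiM J (\<lambda>_. M))"
      using measurable_comp[OF measurable_restrict_subset fm, of J] by (auto simp: comp_def J_def)
    moreover have "f (restrict x {..<n}) = f x" for x by (rule fdep) simp
    ultimately show ?thesis by simp
  qed
  have [measurable]: "(\<lambda>x. x n) \<in> measurable (PiM J (\<lambda>_. M)) M"
    by (rule measurable_component_singleton) (simp add: J_def)
  have Gm: "G \<in> borel_measurable (PiM J (\<lambda>_. M))"
    unfolding G_def using fJ by measurable
  have "(\<integral>\<^sup>+ w. ennreal (h (Fhat (f w) (w n) - F (f w))) \<partial>(PiM UNIV (\<lambda>_. M)))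
      = (\<integral>\<^sup>+ w. G (restrict w J) \<partial>(PiM UNIV (\<lambda>_. M)))"
  proof (rule nn_integral_cong)
    fix w :: "nat \<Rightarrow> 'b"
    have "f (restrict w J) = f w" by (rule fdep) (simp add: J_def)
    then show "ennreal (h (Fhat (f w) (w n) - F (f w))) = G (restrict w J)"
      by (simp add: G_eq J_def)
  qed
  also have "\<dots> = (\<integral>\<^sup>+ x. G x \<partial>(distr (PiM UNIV (\<lambda>_. M)) (PiM J (\<lambda>_. M)) (\<lambda>w. restrict w J)))"
  proof -
    have R: "(\<lambda>w. restrict w J) \<in> measurable (PiM UNIV (\<lambda>_. M)) (PiM J (\<lambda>_. M))"
      by (rule measurable_restrict_subset) simp
    show ?thesis by (rule nn_integral_distr[symmetric, OF R]) (simp add: P.distr_PiM_restrict_finite[OF J] Gm)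
  qed
  also have "\<dots> = (\<integral>\<^sup>+ x. G x \<partial>(PiM J (\<lambda>_. M)))" by (simp add: P.distr_PiM_restrict_finite[OF J])
  also have "\<dots> = (\<integral>\<^sup>+ x. (\<integral>\<^sup>+ y. G (x(n := y)) \<partial>M) \<partial>(PiM {..<n} (\<lambda>_. M)))"
    unfolding J_def by (rule P.product_nn_integral_insert) (use Gm in \<open>auto simp: J_def\<close>)
  also have "\<dots> \<le> (\<integral>\<^sup>+ x. c \<partial>(PiM {..<n} (\<lambda>_. M)))"
  proof (rule nn_integral_mono)
    fix x :: "nat \<Rightarrow> 'b"
    have "f (x(n := y)) = f x" for y by (rule fdep) simp
    then have "(\<integral>\<^sup>+ y. G (x(n := y)) \<partial>M) = (\<integral>\<^sup>+ y. ennreal (h (Fhat (f x) y - F (f x))) \<partial>M)"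
      by (simp add: G_eq)
    also have "\<dots> \<le> c" using hb fZ by blast
    finally show "(\<integral>\<^sup>+ y. G (x(n := y)) \<partial>M) \<le> c" .
  qed
  also have "\<dots> = c"
  proof -
    interpret Q: prob_space "PiM {..<n} (\<lambda>_. M)" by (rule prob_space_PiM) (rule M_prob)
    show ?thesis by (simp add: Q.emeasure_space_1)
  qed
  finally show ?thesis .
qed


abbreviation "PM \<equiv> PiM UNIV (\<lambda>_::nat. M)"

lemma bE: "(\<integral>\<^sup>+ w. ennreal ((norm (gK w k - F (zK w k)))\<^sup>2) \<partial>PM) \<le> ennreal (\<sigma>\<^sup>2)"
  unfolding gK_def
  by (rule fresh[where f="\<lambda>w. zK w k" and n="2*k" and h="\<lambda>v. (norm v)\<^sup>2"])
     (use meas_z[of k "{..<2*k}"] agree_z in_Z oracle_var in auto)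

lemma bEh2: "(\<integral>\<^sup>+ w. ennreal ((norm (ghK w k - F (zhK w k)))\<^sup>2) \<partial>PM) \<le> ennreal (\<sigma>\<^sup>2)"
  unfolding ghK_def
  by (rule fresh[where f="\<lambda>w. zhK w k" and n="2*k+1" and h="\<lambda>v. (norm v)\<^sup>2"])
     (use meas_all[of k "{..<2*k+1}"] agree_zh zhK_in oracle_var in auto)

lemma bEh1: "(\<integral>\<^sup>+ w. ennreal (norm (ghK w k - F (zhK w k))) \<partial>PM) \<le> ennreal \<delta>"
  unfolding ghK_def
  by (rule fresh[where f="\<lambda>w. zhK w k" and n="2*k+1" and h="\<lambda>v. norm v"])
     (use meas_all[of k "{..<2*k+1}"] agree_zh zhK_in oracle_bias in auto)

lemma bEp: "(\<integral>\<^sup>+ w. ennreal ((norm (gpK w k - F (zpK w k)))\<^sup>2) \<partial>PM) \<le> ennreal (\<sigma>\<^sup>2)"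
proof (cases k)
  case 0
  have "(\<integral>\<^sup>+ w. ennreal ((norm (Fhat ((\<lambda>_. z0) w) (w 0) - F ((\<lambda>_. z0) w)))\<^sup>2) \<partial>PM) \<le> ennreal (\<sigma>\<^sup>2)"
    by (rule fresh[where n=0]) (use z0_in oracle_var in auto)
  then show ?thesis using 0 by (simp add: S_0)
next
  case (Suc j)
  then show ?thesis using bE[of j] by (simp add: S_Suc)
qed

definition "V w k = (norm (zK w k - zstar))\<^sup>2 + (norm (zK w k - zpK w k))\<^sup>2 / 16"
definition "Nn w k = (64/63) * ((D * norm (ghK w k - F (zhK w k)) / L) / 2
    + ((norm (ghK w k - F (zhK w k)) / L)\<^sup>2 + (norm (gK w k - F (zK w k)) / L)\<^sup>2)/4
    + ((norm (gK w k - F (zK w k)) / L)\<^sup>2 + (norm (gpK w k - F (zpK w k)) / L)\<^sup>2)/16)"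

lemma V_step: "V w (Suc k) \<le> (1 - 1 / (256 * (L / \<mu>))) * V w k + Nn w k"
proof -
  have "zK w k \<in> Z" "zpK w k \<in> Z" using in_Z by auto
  from det_step[OF this, where g="gK w k" and gh="ghK w k" and gp="gpK w k"]
  show ?thesis unfolding V_def Nn_def S_Suc by (simp add: zhK_def[symmetric])
qed


lemma meas_UNIV[measurable]:
  "(\<lambda>w. zK w k) \<in> borel_measurable PM" "(\<lambda>w. zpK w k) \<in> borel_measurable PM"
  "(\<lambda>w. gpK w k) \<in> borel_measurable PM" "(\<lambda>w. gK w k) \<in> borel_measurable PM"
  "(\<lambda>w. zhK w k) \<in> borel_measurable PM" "(\<lambda>w. ghK w k) \<in> borel_measurable PM"
proof -
  show "(\<lambda>w. zK w k) \<in> borel_measurable PM" "(\<lambda>w. zpK w k) \<in> borel_measurable PM"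
    "(\<lambda>w. gpK w k) \<in> borel_measurable PM" using meas_state[of k UNIV] by auto
  show g: "(\<lambda>w. gK w k) \<in> borel_measurable PM" and zh: "(\<lambda>w. zhK w k) \<in> borel_measurable PM"
    using meas_all[of k UNIV] by auto
  have [measurable]: "(\<lambda>w. w (2*k+1)) \<in> measurable PM M" by (rule measurable_component_singleton) simp
  note zh[measurable]
  show "(\<lambda>w. ghK w k) \<in> borel_measurable PM" unfolding ghK_def by measurable
qed

lemma Fz_meas[measurable]:
  "(\<lambda>w. F (zK w k)) \<in> borel_measurable PM" "(\<lambda>w. F (zpK w k)) \<in> borel_measurable PM"
  "(\<lambda>w. F (zhK w k)) \<in> borel_measurable PM"
proof -
  have e: "F (zK w k) = (F \<circ> closest_point Z) (zK w k)" "F (zpK w k) = (F \<circ> closest_point Z) (zpK w k)"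
    "F (zhK w k) = (F \<circ> closest_point Z) (zhK w k)" for w
    using in_Z[of w k] zhK_in[of w k] by (auto simp: closest_point_self)
  show "(\<lambda>w. F (zK w k)) \<in> borel_measurable PM" "(\<lambda>w. F (zpK w k)) \<in> borel_measurable PM"
    "(\<lambda>w. F (zhK w k)) \<in> borel_measurable PM"
    unfolding e by (rule measurable_compose[OF _ F'_meas], rule meas_UNIV)+
qed

definition "CC = 32 * \<delta> * D / (63 * L) + 40 * \<sigma>\<^sup>2 / (63 * L\<^sup>2)"

lemma D_nonneg: "0 \<le> D" using Z_diam z0_in by force

lemma Nn_bound: "(\<integral>\<^sup>+ w. ennreal (Nn w k) \<partial>PM) \<le> ennreal CC"
proof -
  have L: "0 < L" by (rule L_pos)
  define A1 where "A1 w = norm (ghK w k - F (zhK w k))" for w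
  define A2 where "A2 w = (norm (ghK w k - F (zhK w k)))\<^sup>2" for w
  define A3 where "A3 w = (norm (gK w k - F (zK w k)))\<^sup>2" for w
  define A4 where "A4 w = (norm (gpK w k - F (zpK w k)))\<^sup>2" for w
  have [measurable]: "A1 \<in> borel_measurable PM" "A2 \<in> borel_measurable PM" "A3 \<in> borel_measurable PM"
    "A4 \<in> borel_measurable PM" unfolding A1_def A2_def A3_def A4_def
    by (intro borel_measurable_power measurable_compose[OF _ borel_measurable_norm] borel_measurable_diff meas_UNIV Fz_meas)+
  have nn: "0 \<le> A1 w" "0 \<le> A2 w" "0 \<le> A3 w" "0 \<le> A4 w" for w by (auto simp: A1_def A2_def A3_def A4_def)
  have Neq: "Nn w k = (32 * D / (63 * L)) * A1 w + ((16 / (63 * L\<^sup>2)) * A2 w + ((20 / (63 * L\<^sup>2)) * A3 w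
     + ((4 / (63 * L\<^sup>2)) * A4 w + 0)))" for w
    unfolding Nn_def A1_def A2_def A3_def A4_def using L by (simp add: power_divide field_simps)
  have c: "0 \<le> 32 * D / (63 * L)" "0 \<le> 16 / (63 * L\<^sup>2)" "0 \<le> 20 / (63 * L\<^sup>2)" "0 \<le> 4 / (63 * L\<^sup>2)"
    using L D_nonneg by auto
  have s0: "0 \<le> \<sigma>\<^sup>2" by simp
  have i4: "(\<integral>\<^sup>+ w. ennreal ((4 / (63 * L\<^sup>2)) * A4 w + 0) \<partial>PM) \<le> ennreal ((4 / (63 * L\<^sup>2)) * \<sigma>\<^sup>2 + 0)"
    by (rule lin2) (use nn c bEp[of k] s0 in \<open>auto simp: A4_def\<close>)
  have i3: "(\<integral>\<^sup>+ w. ennreal ((20 / (63 * L\<^sup>2)) * A3 w + ((4 / (63 * L\<^sup>2)) * A4 w + 0)) \<partial>PM)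
     \<le> ennreal ((20 / (63 * L\<^sup>2)) * \<sigma>\<^sup>2 + ((4 / (63 * L\<^sup>2)) * \<sigma>\<^sup>2 + 0))"
    by (rule lin2[OF _ _ _ _ _ _ i4]) (use nn c bE[of k] s0 in \<open>auto simp: A3_def\<close>)
  have i2: "(\<integral>\<^sup>+ w. ennreal ((16 / (63 * L\<^sup>2)) * A2 w + ((20 / (63 * L\<^sup>2)) * A3 w + ((4 / (63 * L\<^sup>2)) * A4 w + 0))) \<partial>PM)
     \<le> ennreal ((16 / (63 * L\<^sup>2)) * \<sigma>\<^sup>2 + ((20 / (63 * L\<^sup>2)) * \<sigma>\<^sup>2 + ((4 / (63 * L\<^sup>2)) * \<sigma>\<^sup>2 + 0)))"
    by (rule lin2[OF _ _ _ _ _ _ i3]) (use nn c bEh2[of k] s0 c in \<open>auto simp: A2_def\<close>)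
  have i1: "(\<integral>\<^sup>+ w. ennreal (Nn w k) \<partial>PM)
     \<le> ennreal ((32 * D / (63 * L)) * \<delta> + ((16 / (63 * L\<^sup>2)) * \<sigma>\<^sup>2 + ((20 / (63 * L\<^sup>2)) * \<sigma>\<^sup>2 + ((4 / (63 * L\<^sup>2)) * \<sigma>\<^sup>2 + 0))))"
    unfolding Neq by (rule lin2[OF _ _ _ _ _ _ i2]) (use nn c bEh1[of k] delta_nonneg s0 c in \<open>auto simp: A1_def\<close>)
  also have "(32 * D / (63 * L)) * \<delta> + ((16 / (63 * L\<^sup>2)) * \<sigma>\<^sup>2 + ((20 / (63 * L\<^sup>2)) * \<sigma>\<^sup>2 + ((4 / (63 * L\<^sup>2)) * \<sigma>\<^sup>2 + 0))) = CC"
    unfolding CC_def using L by (simp add: field_simps)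
  finally show ?thesis .
qed


lemma V_meas: "(\<lambda>w. V w k) \<in> borel_measurable PM"
  unfolding V_def
  by (intro borel_measurable_add borel_measurable_divide borel_measurable_power borel_measurable_const
      measurable_compose[OF _ borel_measurable_norm] borel_measurable_diff meas_UNIV Fz_meas)+

lemma Nn_meas: "(\<lambda>w. Nn w k) \<in> borel_measurable PM"
  unfolding Nn_def
  by (intro borel_measurable_add borel_measurable_times borel_measurable_divide borel_measurable_power borel_measurable_const
      measurable_compose[OF _ borel_measurable_norm] borel_measurable_diff meas_UNIV Fz_meas)+

lemma V_nonneg: "0 \<le> V w k" by (simp add: V_def)
lemma Nn_nonneg: "0 \<le> Nn w k" using D_nonneg L_pos by (simp add: Nn_def)
lemma CC_nonneg: "0 \<le> CC" using D_nonneg L_pos delta_nonneg by (simp add: CC_def)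

lemma rho: "0 \<le> 1 - 1 / (256 * (L / \<mu>))" "(1 - 1 / (256 * (L / \<mu>))) * (CC * (256 * (L / \<mu>))) + CC = CC * (256 * (L / \<mu>))"
proof -
  have L: "0 < L" by (rule L_pos)
  have "1 / (256 * (L / \<mu>)) = \<mu> / (256 * L)" using L mu_pos by (simp add: field_simps)
  also have "\<dots> \<le> 1" using mu_le_L L by (simp add: field_simps)
  finally show "0 \<le> 1 - 1 / (256 * (L / \<mu>))" by simp
  show "(1 - 1 / (256 * (L / \<mu>))) * (CC * (256 * (L / \<mu>))) + CC = CC * (256 * (L / \<mu>))"
    using L mu_pos by (simp add: field_simps)
qed

lemma V_int: "(\<integral>\<^sup>+ w. ennreal (V w k) \<partial>PM) \<le>
    ennreal ((1 - 1 / (256 * (L / \<mu>))) ^ k * (norm (z0 - zstar))\<^sup>2 + CC * (256 * (L / \<mu>)))"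
proof (induction k)
  case 0
  interpret P: product_prob_space "\<lambda>_. M" UNIV by (rule PP)
  have K: "0 \<le> CC * (256 * (L / \<mu>))" using CC_nonneg L_pos mu_pos by simp
  have "(\<integral>\<^sup>+ w. ennreal (V w 0) \<partial>PM) = ennreal ((norm (z0 - zstar))\<^sup>2)"
    by (simp add: V_def S_0 P.emeasure_space_1)
  also have "\<dots> \<le> ennreal ((1 - 1 / (256 * (L / \<mu>))) ^ 0 * (norm (z0 - zstar))\<^sup>2 + CC * (256 * (L / \<mu>)))"
    using K by (intro ennreal_leI) simp
  finally show ?case .
next
  case (Suc k)
  define r where "r = 1 - 1 / (256 * (L / \<mu>))"
  have r0: "0 \<le> r" using rho by (simp add: r_def)
  have K: "0 \<le> CC * (256 * (L / \<mu>))" using CC_nonneg L_pos mu_pos by simp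
  have "(\<integral>\<^sup>+ w. ennreal (V w (Suc k)) \<partial>PM) \<le> (\<integral>\<^sup>+ w. ennreal (r * V w k + Nn w k) \<partial>PM)"
    by (intro nn_integral_mono ennreal_leI) (use V_step in \<open>simp add: r_def\<close>)
  also have "\<dots> \<le> ennreal (r * (r ^ k * (norm (z0 - zstar))\<^sup>2 + CC * (256 * (L / \<mu>))) + CC)"
    by (rule lin2[OF V_meas Nn_meas V_nonneg Nn_nonneg r0 Suc.IH[folded r_def] Nn_bound])
       (use r0 K CC_nonneg in auto)
  also have "r * (r ^ k * (norm (z0 - zstar))\<^sup>2 + CC * (256 * (L / \<mu>))) + CC
      = r ^ Suc k * (norm (z0 - zstar))\<^sup>2 + CC * (256 * (L / \<mu>))"
    using rho(2) unfolding r_def[symmetric] by (simp add: algebra_simps)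
  finally show ?case unfolding r_def .
qed


end


theorem proposition1:
  fixes Z :: "'a::euclidean_space set"
    and F :: "'a \<Rightarrow> 'a"
    and Fhat :: "'a \<Rightarrow> 'b \<Rightarrow> 'a"
    and M :: "'b measure"
    and D L \<mu> \<delta> \<sigma> :: real
    and zstar z0 :: 'a
  assumes Z_closed: "closed Z" and Z_convex: "convex Z" and Z_ne: "Z \<noteq> {}"
    and Z_diam: "\<forall>z\<in>Z. \<forall>z'\<in>Z. norm (z - z') \<le> D"
    and F_strmono: "\<forall>z\<in>Z. \<forall>z'\<in>Z. (F z - F z') \<bullet> (z - z') \<ge> \<mu> * (norm (z - z'))\<^sup>2"
    and F_lip: "\<forall>z\<in>Z. \<forall>z'\<in>Z. norm (F z - F z') \<le> L * norm (z - z')"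
    and mu_pos: "0 < \<mu>" and mu_le_L: "\<mu> \<le> L"
    and zstar_in: "zstar \<in> Z"
    and zstar_sol: "\<forall>z\<in>Z. F zstar \<bullet> (z - zstar) \<ge> 0"
    and M_prob: "prob_space M"
    and Fhat_meas: "(\<lambda>(z, \<xi>). Fhat z \<xi>) \<in> borel_measurable (borel \<Otimes>\<^sub>M M)"
    and delta_nonneg: "0 \<le> \<delta>" and sigma_nonneg: "0 \<le> \<sigma>"
    and oracle_bias: "\<forall>z\<in>Z. (\<integral>\<^sup>+ \<xi>. ennreal (norm (Fhat z \<xi> - F z)) \<partial>M) \<le> ennreal \<delta>"
    and oracle_var: "\<forall>z\<in>Z. (\<integral>\<^sup>+ \<xi>. ennreal ((norm (Fhat z \<xi> - F z))\<^sup>2) \<partial>M) \<le> ennreal (\<sigma>\<^sup>2)"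
    and z0_in: "z0 \<in> Z"
  shows "\<forall>k::nat.
    (\<integral>\<^sup>+ w. ennreal ((norm (sep_iter Z Fhat (1 / (4 * L)) (1 / (64 * (L / \<mu>)))
                              (1 / (64 * (L / \<mu>))) (1 / (4 * L)) (1 / (64 * L * (L / \<mu>)))
                              z0 k w - zstar))\<^sup>2)
        \<partial>(\<Pi>\<^sub>M i\<in>(UNIV::nat set). M))
    \<le> ennreal ((1 - 1 / (256 * (L / \<mu>))) ^ k * (283 / 256) * (norm (z0 - zstar))\<^sup>2
               + (40 * \<sigma>\<^sup>2 / (63 * L\<^sup>2) + 32 * \<delta> * D / (63 * L)) * (256 * (L / \<mu>)))"
proof
  fix k :: nat
  interpret sepl Z F Fhat M D L \<mu> \<delta> \<sigma> zstar z0
    by (rule sepl.intro) (rule assms)+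
  have eq: "sep_iter Z Fhat (1 / (4 * L)) (1 / (64 * (L / \<mu>))) (1 / (64 * (L / \<mu>))) (1 / (4 * L))
      (1 / (64 * L * (L / \<mu>))) z0 k w = zK w k" for w
    by (simp add: sep_iter_def zK_def S_def al_def bt_def ta_def)
  have "(\<integral>\<^sup>+ w. ennreal ((norm (sep_iter Z Fhat (1 / (4 * L)) (1 / (64 * (L / \<mu>)))
                              (1 / (64 * (L / \<mu>))) (1 / (4 * L)) (1 / (64 * L * (L / \<mu>)))
                              z0 k w - zstar))\<^sup>2) \<partial>(\<Pi>\<^sub>M i\<in>(UNIV::nat set). M))
     \<le> (\<integral>\<^sup>+ w. ennreal (V w k) \<partial>PM)"
    unfolding eq by (intro nn_integral_mono ennreal_leI) (simp add: V_def)
  also have "\<dots> \<le> ennreal ((1 - 1 / (256 * (L / \<mu>))) ^ k * (norm (z0 - zstar))\<^sup>2 + CC * (256 * (L / \<mu>)))"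
    by (rule V_int)
  also have "\<dots> \<le> ennreal ((1 - 1 / (256 * (L / \<mu>))) ^ k * (283 / 256) * (norm (z0 - zstar))\<^sup>2
               + (40 * \<sigma>\<^sup>2 / (63 * L\<^sup>2) + 32 * \<delta> * D / (63 * L)) * (256 * (L / \<mu>)))"
  proof (intro ennreal_leI)
    have p: "0 \<le> (1 - 1 / (256 * (L / \<mu>))) ^ k * (norm (z0 - zstar))\<^sup>2" using rho(1) by simp
    have "CC = 40 * \<sigma>\<^sup>2 / (63 * L\<^sup>2) + 32 * \<delta> * D / (63 * L)" by (simp add: CC_def)
    show "(1 - 1 / (256 * (L / \<mu>))) ^ k * (norm (z0 - zstar))\<^sup>2 + CC * (256 * (L / \<mu>))
       \<le> (1 - 1 / (256 * (L / \<mu>))) ^ k * (283 / 256) * (norm (z0 - zstar))\<^sup>2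
         + (40 * \<sigma>\<^sup>2 / (63 * L\<^sup>2) + 32 * \<delta> * D / (63 * L)) * (256 * (L / \<mu>))"
    proof -
      have "(1 - 1 / (256 * (L / \<mu>))) ^ k * (283 / 256) * (norm (z0 - zstar))\<^sup>2
          = (283 / 256) * ((1 - 1 / (256 * (L / \<mu>))) ^ k * (norm (z0 - zstar))\<^sup>2)" by simp
      moreover have "CC * (256 * (L / \<mu>)) = (40 * \<sigma>\<^sup>2 / (63 * L\<^sup>2) + 32 * \<delta> * D / (63 * L)) * (256 * (L / \<mu>))"
        by (simp add: CC_def)
      ultimately show ?thesis using p by linarith
    qed
  qed
  finally show "(\<integral>\<^sup>+ w. ennreal ((norm (sep_iter Z Fhat (1 / (4 * L)) (1 / (64 * (L / \<mu>)))
                              (1 / (64 * (L / \<mu>))) (1 / (4 * L)) (1 / (64 * L * (L / \<mu>)))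
                              z0 k w - zstar))\<^sup>2) \<partial>(\<Pi>\<^sub>M i\<in>(UNIV::nat set). M))
    \<le> ennreal ((1 - 1 / (256 * (L / \<mu>))) ^ k * (283 / 256) * (norm (z0 - zstar))\<^sup>2
               + (40 * \<sigma>\<^sup>2 / (63 * L\<^sup>2) + 32 * \<delta> * D / (63 * L)) * (256 * (L / \<mu>)))" .
qed

end
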